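(* Let $(X,d_X,\mu_X)$ be a finite metric measure space, $X=\{x_1,\dots,x_n\}$, with $\mu_X(x_i)>0$ for all $i$, and let $1\le k\le n$. Then for all $i,j$, \[ E_{X,k}(x_i,x_j)=|d_X(x_i,x_j)-[\Phi_k(x_i),\Phi_k(x_j)]|\le\frac{|\lambda_{k+1}|}{\sqrt{\mu_X(x_i)\mu_X(x_j)}}. \]
   Context: The distance kernel operator of the finite space is the matrix $D_{ij}=d_X(x_i,x_j)\mu_X(x_j)$, self-adjoint for the inner product $\langle v,w\rangle_Q=\sum_i v_iw_i\mu_X(x_i)$. It has real eigenvalues $\lambda_1,\dots,\lambda_n$ ordered by decreasing absolute value (assumed of multiplicity one) and a $Q$-orthonormal basis of real eigenvectors $e_1,\dots,e_n$; set $\lambda_{n+1}:=0$. The distance kernel embedding is $\Phi_k(x_j)=(\sqrt{\lambda_1}(e_1)_j,\dots,\sqrt{\lambda_k}(e_k)_j)\in\mathbb{C}^k$, the square root of a negative number taken with positive imaginary part. For $v,w\in\mathbb{C}^k$, $[v,w]=\sum_{l=1}^k v_lw_l$. *)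

theory Defs
  imports Complex_Main
begin

text \<open>A finite metric measure space X = {x_0,...,x_{n-1}} is encoded by indices
  0..<n, a distance d :: nat => nat => real and point masses mu :: nat => real.\<close>

definition finite_metric :: "nat \<Rightarrow> (nat \<Rightarrow> nat \<Rightarrow> real) \<Rightarrow> bool" where
  "finite_metric n d \<longleftrightarrow>
     (\<forall>i<n. \<forall>j<n. d i j \<ge> 0 \<and> (d i j = 0 \<longleftrightarrow> i = j) \<and> d i j = d j i) \<and>
     (\<forall>i<n. \<forall>j<n. \<forall>l<n. d i l \<le> d i j + d j l)"

definition dist_kernel_apply :: "nat \<Rightarrow> (nat \<Rightarrow> nat \<Rightarrow> real) \<Rightarrow> (nat \<Rightarrow> real) \<Rightarrow> (nat \<Rightarrow> real) \<Rightarrow> nat \<Rightarrow> real" where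
  "dist_kernel_apply n d mu v i = (\<Sum>j<n. d i j * mu j * v j)"

definition Q_inner :: "nat \<Rightarrow> (nat \<Rightarrow> real) \<Rightarrow> (nat \<Rightarrow> real) \<Rightarrow> (nat \<Rightarrow> real) \<Rightarrow> real" where
  "Q_inner n mu v w = (\<Sum>i<n. v i * w i * mu i)"

definition dk_eigensystem :: "nat \<Rightarrow> (nat \<Rightarrow> nat \<Rightarrow> real) \<Rightarrow> (nat \<Rightarrow> real) \<Rightarrow> (nat \<Rightarrow> real) \<Rightarrow> (nat \<Rightarrow> nat \<Rightarrow> real) \<Rightarrow> bool" where
  "dk_eigensystem n d mu lam e \<longleftrightarrow>
     (\<forall>l<n. \<forall>i<n. dist_kernel_apply n d mu (e l) i = lam l * e l i) \<and>
     (\<forall>l<n. \<forall>m<n. Q_inner n mu (e l) (e m) = (if l = m then 1 else 0)) \<and>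
     (\<forall>l m. l \<le> m \<longrightarrow> m < n \<longrightarrow> \<bar>lam m\<bar> \<le> \<bar>lam l\<bar>) \<and>
     inj_on lam {..<n}"

text \<open>lambda_{k+1} in the paper's 1-indexing, with lambda_{n+1} = 0.\<close>
definition lam_ext :: "nat \<Rightarrow> (nat \<Rightarrow> real) \<Rightarrow> nat \<Rightarrow> real" where
  "lam_ext n lam l = (if l < n then lam l else 0)"

text \<open>Distance kernel embedding Phi_k(x_j) in C^k: component l (l < k) is
  sqrt(lambda_l) (e_l)_j, csqrt of a negative number having positive imaginary part.\<close>
definition dk_embedding :: "(nat \<Rightarrow> real) \<Rightarrow> (nat \<Rightarrow> nat \<Rightarrow> real) \<Rightarrow> nat \<Rightarrow> nat \<Rightarrow> complex" where
  "dk_embedding lam e j l = csqrt (complex_of_real (lam l)) * complex_of_real (e l j)"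

definition bil_pair :: "nat \<Rightarrow> (nat \<Rightarrow> complex) \<Rightarrow> (nat \<Rightarrow> complex) \<Rightarrow> complex" where
  "bil_pair k v w = (\<Sum>l<k. v l * w l)"

end

theory Submission
  imports Defs "Jordan_Normal_Form.Determinant"
begin

lemma completeness:
  fixes mu :: "nat \<Rightarrow> real" and e :: "nat \<Rightarrow> nat \<Rightarrow> real"
  assumes orth: "\<forall>l<n. \<forall>m<n. Q_inner n mu (e l) (e m) = (if l = m then 1 else 0)"
    and pos: "\<forall>i<n. mu i > 0" and i: "i < n" and j: "j < n"
  shows "(\<Sum>l<n. e l i * e l j) = (if i = j then 1 / mu i else 0)"
proof -
  define A :: "real mat" where "A = mat n n (\<lambda>(l,i). e l i * sqrt (mu i))"
  define B :: "real mat" where "B = mat n n (\<lambda>(i,l). e l i * sqrt (mu i))"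
  have Ac: "A \<in> carrier_mat n n" and Bc: "B \<in> carrier_mat n n" by (auto simp: A_def B_def)
  have "A * B = 1\<^sub>m n"
  proof (rule eq_matI)
    fix l m assume l: "l < dim_row (1\<^sub>m n :: real mat)" and m: "m < dim_col (1\<^sub>m n :: real mat)"
    hence l': "l < n" and m': "m < n" by auto
    have "(A * B) $$ (l, m) = (\<Sum>i<n. e l i * sqrt (mu i) * (e m i * sqrt (mu i)))"
      using l' m' by (auto simp: A_def B_def scalar_prod_def lessThan_atLeast0 intro!: sum.cong)
    also have "\<dots> = Q_inner n mu (e l) (e m)"
      unfolding Q_inner_def
      by (rule sum.cong) (use pos in auto)
    also have "\<dots> = 1\<^sub>m n $$ (l, m)" using orth l' m' by simp
    finally show "(A * B) $$ (l, m) = 1\<^sub>m n $$ (l, m)" .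
  qed (auto simp: A_def B_def)
  hence BA: "B * A = 1\<^sub>m n" using mat_mult_left_right_inverse[OF Ac Bc] by blast
  have "(B * A) $$ (i, j) = (\<Sum>l<n. e l i * sqrt (mu i) * (e l j * sqrt (mu j)))"
    using i j by (auto simp: A_def B_def scalar_prod_def lessThan_atLeast0 intro!: sum.cong)
  also have "\<dots> = (\<Sum>l<n. e l i * e l j) * (sqrt (mu i) * sqrt (mu j))"
    by (simp add: sum_distrib_left mult_ac)
  finally have eq: "(\<Sum>l<n. e l i * e l j) * (sqrt (mu i) * sqrt (mu j)) = (if i = j then 1 else 0)"
    using BA i j by simp
  have mi: "mu i > 0" "mu j > 0" using pos i j by auto
  show ?thesis
  proof (cases "i = j")
    case True
    then show ?thesis using eq mi by (simp add: field_simps)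
  next
    case False
    then show ?thesis using eq mi by simp
  qed
qed

theorem proposition6p14:
  fixes n k :: nat and d :: "nat \<Rightarrow> nat \<Rightarrow> real" and mu lam :: "nat \<Rightarrow> real"
    and e :: "nat \<Rightarrow> nat \<Rightarrow> real" and i j :: nat
  assumes "finite_metric n d"
    and "\<forall>i<n. mu i > 0"
    and "dk_eigensystem n d mu lam e"
    and "1 \<le> k" and "k \<le> n"
    and "i < n" and "j < n"
  shows "cmod (complex_of_real (d i j)
            - bil_pair k (dk_embedding lam e i) (dk_embedding lam e j))
         \<le> \<bar>lam_ext n lam k\<bar> / sqrt (mu i * mu j)"
proof -
  note pos = assms(2)
  have eig: "\<forall>l<n. \<forall>i<n. dist_kernel_apply n d mu (e l) i = lam l * e l i"
    and orth: "\<forall>l<n. \<forall>m<n. Q_inner n mu (e l) (e m) = (if l = m then 1 else 0)"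
    and ord: "\<forall>l m. l \<le> m \<longrightarrow> m < n \<longrightarrow> \<bar>lam m\<bar> \<le> \<bar>lam l\<bar>"
    using assms(3) unfolding dk_eigensystem_def by auto
  have i: "i < n" and j: "j < n" by fact+
  have mi: "mu i > 0" "mu j > 0" using pos i j by auto
  have bp: "bil_pair k (dk_embedding lam e i) (dk_embedding lam e j)
      = complex_of_real (\<Sum>l<k. lam l * e l i * e l j)"
  proof -
    have "\<And>l. csqrt (complex_of_real (lam l)) * csqrt (complex_of_real (lam l))
        = complex_of_real (lam l)"
      by (metis power2_csqrt power2_eq_square)
    hence "\<And>l. dk_embedding lam e i l * dk_embedding lam e j l
        = complex_of_real (lam l * e l i * e l j)"
      unfolding dk_embedding_def
      by (metis (no_types, lifting) mult.assoc mult.left_commute of_real_mult)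
    thus ?thesis unfolding bil_pair_def by simp
  qed
  have dsum: "d i j = (\<Sum>l<n. lam l * e l i * e l j)"
  proof -
    have "(\<Sum>l<n. lam l * e l i * e l j) = (\<Sum>l<n. (\<Sum>m<n. d i m * mu m * e l m) * e l j)"
      apply (rule sum.cong, simp)
      using eig i unfolding dist_kernel_apply_def by simp
    also have "\<dots> = (\<Sum>m<n. d i m * mu m * (\<Sum>l<n. e l m * e l j))"
    proof -
      have "(\<Sum>l<n. (\<Sum>m<n. d i m * mu m * e l m) * e l j)
          = (\<Sum>l<n. \<Sum>m<n. d i m * mu m * (e l m * e l j))"
        by (simp add: sum_distrib_right mult.assoc)
      also have "\<dots> = (\<Sum>m<n. \<Sum>l<n. d i m * mu m * (e l m * e l j))"
        by (rule sum.swap)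
      also have "\<dots> = (\<Sum>m<n. d i m * mu m * (\<Sum>l<n. e l m * e l j))"
        by (simp add: sum_distrib_left)
      finally show ?thesis .
    qed
    also have "\<dots> = (\<Sum>m<n. d i m * mu m * (if m = j then 1 / mu m else 0))"
      by (rule sum.cong, simp) (use completeness[OF orth pos] j in auto)
    also have "\<dots> = d i j * mu j * (1 / mu j)"
      using j by (simp add: if_distrib sum.delta cong: if_cong)
    also have "\<dots> = d i j" using mi by simp
    finally show ?thesis by simp
  qed
  have dsplit: "(\<Sum>l<n. lam l * e l i * e l j)
      = (\<Sum>l<k. lam l * e l i * e l j) + (\<Sum>l\<in>{k..<n}. lam l * e l i * e l j)"
  proof -
    have "{..<n} = {..<k} \<union> {k..<n}" using assms(5) by auto
    hence "(\<Sum>l<n. lam l * e l i * e l j) = (\<Sum>l\<in>{..<k} \<union> {k..<n}. lam l * e l i * e l j)"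
      by simp
    also have "\<dots> = (\<Sum>l<k. lam l * e l i * e l j) + (\<Sum>l\<in>{k..<n}. lam l * e l i * e l j)"
      by (rule sum.union_disjoint) auto
    finally show ?thesis .
  qed
  define R where "R = (\<Sum>l\<in>{k..<n}. lam l * e l i * e l j)"
  have lhs: "cmod (complex_of_real (d i j)
            - bil_pair k (dk_embedding lam e i) (dk_embedding lam e j)) = \<bar>R\<bar>"
  proof -
    have "complex_of_real (d i j)
            - bil_pair k (dk_embedding lam e i) (dk_embedding lam e j) = complex_of_real R"
      unfolding bp dsum dsplit R_def by simp
    thus ?thesis by simp
  qed
  show ?thesis
  proof (cases "k < n")
    case False
    hence "k = n" using assms(5) by auto
    thus ?thesis unfolding lhs R_def lam_ext_def by simp
  next
    case True
    define s where "s = sqrt (mu i)"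
    define t where "t = sqrt (mu j)"
    have s: "s > 0" "s * s = mu i" and t: "t > 0" "t * t = mu j"
      using mi by (auto simp: s_def t_def)
    have sq: "sqrt (mu i * mu j) = s * t" by (simp add: s_def t_def real_sqrt_mult)
    have "\<bar>R\<bar> \<le> (\<Sum>l\<in>{k..<n}. \<bar>lam l * e l i * e l j\<bar>)" unfolding R_def by (rule sum_abs)
    also have "\<dots> \<le> (\<Sum>l\<in>{k..<n}. \<bar>lam k\<bar> * (\<bar>e l i\<bar> * \<bar>e l j\<bar>))"
    proof (rule sum_mono)
      fix l assume "l \<in> {k..<n}"
      hence "\<bar>lam l\<bar> \<le> \<bar>lam k\<bar>" using ord by auto
      thus "\<bar>lam l * e l i * e l j\<bar> \<le> \<bar>lam k\<bar> * (\<bar>e l i\<bar> * \<bar>e l j\<bar>)"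
        unfolding abs_mult mult.assoc by (rule mult_right_mono) auto
    qed
    also have "\<dots> = \<bar>lam k\<bar> * (\<Sum>l\<in>{k..<n}. \<bar>e l i\<bar> * \<bar>e l j\<bar>)"
      by (simp add: sum_distrib_left)
    also have "\<dots> \<le> \<bar>lam k\<bar> * (1 / (s * t))"
    proof (rule mult_left_mono)
      have amgm: "2 * (\<bar>a\<bar> * \<bar>b\<bar>) * (s * t) \<le> mu i * a\<^sup>2 + mu j * b\<^sup>2" for a b :: real
      proof -
        have "0 \<le> (s * \<bar>a\<bar> - t * \<bar>b\<bar>)\<^sup>2" by simp
        thus ?thesis using s t by (simp add: power2_eq_square algebra_simps)
      qed
      have "2 * (\<Sum>l\<in>{k..<n}. \<bar>e l i\<bar> * \<bar>e l j\<bar>) * (s * t)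
          = (\<Sum>l\<in>{k..<n}. 2 * (\<bar>e l i\<bar> * \<bar>e l j\<bar>) * (s * t))"
        by (simp add: sum_distrib_left sum_distrib_right)
      also have "\<dots> \<le> (\<Sum>l\<in>{k..<n}. mu i * (e l i)\<^sup>2 + mu j * (e l j)\<^sup>2)"
        by (rule sum_mono) (rule amgm)
      also have "\<dots> = mu i * (\<Sum>l\<in>{k..<n}. (e l i)\<^sup>2) + mu j * (\<Sum>l\<in>{k..<n}. (e l j)\<^sup>2)"
        by (simp add: sum.distrib sum_distrib_left)
      also have "\<dots> \<le> mu i * (\<Sum>l<n. (e l i)\<^sup>2) + mu j * (\<Sum>l<n. (e l j)\<^sup>2)"
      proof -
        have sub: "{k..<n} \<subseteq> {..<n}" by auto
        have "(\<Sum>l\<in>{k..<n}. (e l i)\<^sup>2) \<le> (\<Sum>l<n. (e l i)\<^sup>2)"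
          by (rule sum_mono2[OF _ sub]) auto
        moreover have "(\<Sum>l\<in>{k..<n}. (e l j)\<^sup>2) \<le> (\<Sum>l<n. (e l j)\<^sup>2)"
          by (rule sum_mono2[OF _ sub]) auto
        ultimately show ?thesis using mi by (simp add: add_mono)
      qed
      also have "\<dots> = 2"
        using completeness[OF orth pos i i] completeness[OF orth pos j j] mi
        by (simp add: power2_eq_square)
      finally have "2 * (\<Sum>l\<in>{k..<n}. \<bar>e l i\<bar> * \<bar>e l j\<bar>) * (s * t) \<le> 2" .
      thus "(\<Sum>l\<in>{k..<n}. \<bar>e l i\<bar> * \<bar>e l j\<bar>) \<le> 1 / (s * t)"
        using s t by (simp add: field_simps)
    qed simp
    also have "\<dots> = \<bar>lam_ext n lam k\<bar> / sqrt (mu i * mu j)"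
      using True by (simp add: lam_ext_def sq)
    finally show ?thesis using lhs by simp
  qed
qed

end
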